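(* Let $a\in\mathbb{Q}$ with $1\le a<4$. Define $b_0=\frac{a+1}{2}$ and $b_{i+1}=\mathrm{approx}\!\left(\frac{a+b_i^2}{2b_i},\,2^{-2^{i+1}-1}\right)$. Define $x:\mathbb{Q}^+\to\mathbb{Q}$ by $x(\varepsilon)=b_n$, where $n$ is the least natural number such that $2^{-2^n}\le\varepsilon$. Then $x$ is a regular function, i.e. $|x(\varepsilon_1)-x(\varepsilon_2)|\le\varepsilon_1+\varepsilon_2$ for all $\varepsilon_1,\varepsilon_2\in\mathbb{Q}^+$.
   Context: $\mathbb{Q}^+$ denotes the strictly positive rationals. For rationals in lowest terms, $\frac{n_1}{d_1}$ is simpler than $\frac{n_2}{d_2}$ if $|n_1|+|d_1|<|n_2|+|d_2|$; every closed rational interval contains a unique simplest rational. For $c\in\mathbb{Q}$, $\varepsilon\in\mathbb{Q}^+$, $\mathrm{approx}(c,\varepsilon)$ is the simplest rational number in $[c-\varepsilon,c+\varepsilon]$. *)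

theory Defs
  imports Main "HOL.Rat"
begin

definition rat_size :: "rat \<Rightarrow> int" where
  "rat_size q = (case quotient_of q of (n, d) \<Rightarrow> \<bar>n\<bar> + \<bar>d\<bar>)"

definition simpler :: "rat \<Rightarrow> rat \<Rightarrow> bool" where
  "simpler p q \<longleftrightarrow> rat_size p < rat_size q"

text \<open>The simplest rational in the closed interval [lo, hi] (unique, per the paper).\<close>
definition simplest_in :: "rat \<Rightarrow> rat \<Rightarrow> rat" where
  "simplest_in lo hi = (THE q. lo \<le> q \<and> q \<le> hi \<and>
      (\<forall>r. lo \<le> r \<and> r \<le> hi \<and> r \<noteq> q \<longrightarrow> simpler q r))"

definition approx :: "rat \<Rightarrow> rat \<Rightarrow> rat" where
  "approx c \<epsilon> = simplest_in (c - \<epsilon>) (c + \<epsilon>)"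

fun sqrt_seq :: "rat \<Rightarrow> nat \<Rightarrow> rat" where
  "sqrt_seq a 0 = (a + 1) / 2"
| "sqrt_seq a (Suc i) =
     approx ((a + (sqrt_seq a i)\<^sup>2) / (2 * sqrt_seq a i)) (1 / 2 ^ (2 ^ (i + 1) + 1))"

definition sqrt_approx :: "rat \<Rightarrow> rat \<Rightarrow> rat" where
  "sqrt_approx a \<epsilon> = sqrt_seq a (LEAST n. 1 / 2 ^ (2 ^ n) \<le> \<epsilon>)"

end

theory Submission
  imports Defs Complex_Main
begin

lemma rat_size_ge1: "rat_size q \<ge> 1"
proof -
  obtain n d where qd: "quotient_of q = (n,d)" by force
  have "d > 0" using quotient_of_denom_pos[OF qd] .
  then show ?thesis by (simp add: rat_size_def qd)
qed

lemma rat_size_1: "rat_size q = 1 \<Longrightarrow> q = 0"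
proof -
  assume h: "rat_size q = 1"
  obtain n d where qd: "quotient_of q = (n,d)" by force
  have "d > 0" using quotient_of_denom_pos[OF qd] .
  with h have "n = 0" by (simp add: rat_size_def qd)
  then show ?thesis using quotient_of_div[OF qd] by simp
qed

lemma rat_size_0: "rat_size 0 = 1"
  by (simp add: rat_size_def)

lemma rat_size_uminus: "rat_size (- q) = rat_size q"
  by (simp add: rat_size_def rat_uminus_code split: prod.splits)

lemma abs_div_le_int: fixes x g :: int assumes "g \<ge> 1" "g dvd x" shows "\<bar>x div g\<bar> \<le> \<bar>x\<bar>"
proof -
  have "\<bar>x\<bar> = \<bar>x div g\<bar> * g" using assms by (metis abs_mult dvd_div_mult_self abs_of_pos zero_less_one order_less_le_trans)
  moreover have "\<bar>x div g\<bar> * 1 \<le> \<bar>x div g\<bar> * g" using assms(1) by (intro mult_left_mono) auto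
  ultimately show ?thesis by simp
qed

lemma rat_size_le: assumes "0 < s" shows "rat_size (of_int r / of_int s) \<le> \<bar>r\<bar> + s"
proof -
  have "of_int r / of_int s = Fract r s" by (simp add: Fract_of_int_quotient)
  then have "quotient_of (of_int r / of_int s) = Rat.normalize (r, s)" by (simp add: quotient_of_Fract)
  moreover have g: "gcd r s \<ge> 1" using assms by (simp add: int_one_le_iff_zero_less)
  moreover have "\<bar>r div gcd r s\<bar> \<le> \<bar>r\<bar>" by (rule abs_div_le_int[OF g]) simp
  moreover have "\<bar>s div gcd r s\<bar> \<le> \<bar>s\<bar>" by (rule abs_div_le_int[OF g]) simp
  ultimately show ?thesis using assms
    by (simp add: rat_size_def Rat.normalize_def Let_def)
qed

lemma farey_int:
  fixes p1 q1 p2 q2 :: int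
  assumes "0<p1" "0<q1" "0<p2" "0<q2" "coprime p1 q1" "p1*q2 < p2*q1" "p1+q1 = p2+q2"
  shows "\<exists>r s. 0<r \<and> 0<s \<and> r+s < p1+q1 \<and> p1*s < r*q1 \<and> r*q2 \<le> p2*s"
proof -
  define m where "m = p1+q1"
  have m2: "m \<ge> 2" using assms by (simp add: m_def)
  have "gcd p1 m = 1" using assms(5) by (simp add: m_def gcd_add2)
  then obtain u v where uv: "u*p1 + v*m = 1" using bezout_int[of p1 m] by metis
  define k where "k = (-u) div m"
  define d where "d = (-u) mod m"
  have dk: "-u = m*k + d" unfolding k_def d_def by simp
  have d0: "0 \<le> d" "d < m" using m2 unfolding d_def by simp_all
  define c where "c = v - p1*k"
  have cm: "c*m = p1*d + 1"
  proof -
    have "c*m = v*m - p1*(m*k)" by (simp add: c_def algebra_simps)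
    also have "\<dots> = v*m - p1*(-u - d)" using dk by simp
    also have "\<dots> = p1*d + 1" using uv by (simp add: algebra_simps)
    finally show ?thesis .
  qed
  have "c*m > 0" using cm d0 assms(1) by (simp add: add_pos_nonneg)
  then have c0: "c > 0" using m2 by (simp add: zero_less_mult_iff)
  have "d \<noteq> 0"
  proof
    assume "d = 0"
    then have "c*m = 1" using cm by simp
    moreover have "c*m \<ge> 1*m" using c0 m2 by (intro mult_right_mono) auto
    ultimately show False using m2 by simp
  qed
  then have dpos: "d > 0" using d0 by simp
  have p12: "p1 < p2"
  proof -
    have "m-p2 = q2" "m-p1 = q1" using assms(7) by (simp_all add: m_def)
    then have "p1*(m-p2) < p2*(m-p1)" using assms(6) by simp
    then have "p1*m < p2*m" by (simp add: algebra_simps)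
    then show ?thesis using m2 by simp
  qed
  have "(p2-p1)*d \<ge> 1*d" using p12 dpos by (intro mult_right_mono) auto
  then have cmle: "c*m \<le> p2*d" using cm dpos by (simp add: algebra_simps)
  have "p2*d < m*d" using dpos assms(4) assms(7) by (simp add: m_def)
  then have "c*m < d*m" using cmle by (simp add: mult.commute)
  then have cd: "c < d" using m2 by simp
  show ?thesis
  proof (intro exI conjI)
    show "0 < c" by (rule c0)
    show "0 < d - c" using cd by simp
    show "c + (d - c) < p1 + q1" using d0 by (simp add: m_def)
    have "c*q1 - p1*(d-c) = c*m - p1*d" by (simp add: m_def algebra_simps)
    then show "p1*(d-c) < c*q1" using cm by simp
    have "c*q2 - p2*(d-c) = c*m - p2*d" using assms(7) by (simp add: m_def algebra_simps)
    then show "c*q2 \<le> p2*(d-c)" using cmle by simp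
  qed
qed

lemma frac_less_iff: fixes a b c d :: int assumes "0<b" "0<d"
  shows "(of_int a / of_int b < (of_int c / of_int d :: rat)) \<longleftrightarrow> a*d < c*b"
proof -
  have "(of_int a / of_int b < (of_int c / of_int d :: rat)) \<longleftrightarrow> of_int a * of_int d < (of_int c * of_int b :: rat)"
    using assms by (simp add: field_simps)
  also have "\<dots> \<longleftrightarrow> a*d < c*b" by (metis of_int_mult of_int_less_iff)
  finally show ?thesis .
qed

lemma frac_le_iff: fixes a b c d :: int assumes "0<b" "0<d"
  shows "(of_int a / of_int b \<le> (of_int c / of_int d :: rat)) \<longleftrightarrow> a*d \<le> c*b"
proof -
  have "(of_int a / of_int b \<le> (of_int c / of_int d :: rat)) \<longleftrightarrow> of_int a * of_int d \<le> (of_int c * of_int b :: rat)"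
    using assms by (simp add: field_simps)
  also have "\<dots> \<longleftrightarrow> a*d \<le> c*b" by (metis of_int_mult of_int_le_iff)
  finally show ?thesis .
qed

lemma pos_simpler:
  fixes x y :: rat
  assumes "0 < x" "x < y" "rat_size x = rat_size y"
  shows "\<exists>z. x < z \<and> z \<le> y \<and> rat_size z < rat_size x"
proof -
  obtain p1 q1 where h1: "quotient_of x = (p1,q1)" by force
  obtain p2 q2 where h2: "quotient_of y = (p2,q2)" by force
  have q1: "q1 > 0" using quotient_of_denom_pos[OF h1] .
  have q2: "q2 > 0" using quotient_of_denom_pos[OF h2] .
  have x: "x = of_int p1 / of_int q1" using quotient_of_div[OF h1] .
  have y: "y = of_int p2 / of_int q2" using quotient_of_div[OF h2] .
  have p1: "p1 > 0" using assms(1) q1 x by (simp add: zero_less_divide_iff)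
  have "0 < y" using assms(1,2) by simp
  then have p2: "p2 > 0" using q2 y by (simp add: zero_less_divide_iff)
  have cop: "coprime p1 q1" using quotient_of_coprime[OF h1] .
  have lt: "p1*q2 < p2*q1" using assms(2) x y frac_less_iff[OF q1 q2] by simp
  have sz: "p1+q1 = p2+q2" using assms(3) p1 p2 q1 q2 by (simp add: rat_size_def h1 h2)
  obtain r s where rs: "0<r" "0<s" "r+s < p1+q1" "p1*s < r*q1" "r*q2 \<le> p2*s"
    using farey_int[OF p1 q1 p2 q2 cop lt sz] by blast
  show ?thesis
  proof (intro exI conjI)
    show "x < of_int r / of_int s" using x frac_less_iff[OF q1 rs(2)] rs(4) by simp
    show "of_int r / of_int s \<le> y" using y frac_le_iff[OF rs(2) q2] rs(5) by simp
    have "rat_size (of_int r / of_int s) \<le> \<bar>r\<bar> + s" by (rule rat_size_le[OF rs(2)])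
    then show "rat_size (of_int r / of_int s) < rat_size x" using rs p1 q1 by (simp add: rat_size_def h1)
  qed
qed

lemma no_two_min:
  fixes x y :: rat
  assumes "x < y" "rat_size x = rat_size y" "\<forall>z. x \<le> z \<and> z \<le> y \<longrightarrow> rat_size x \<le> rat_size z"
  shows False
proof (cases "0 < x")
  case True
  then obtain z where "x < z" "z \<le> y" "rat_size z < rat_size x" using pos_simpler[OF True assms(1,2)] by blast
  then show ?thesis using assms(3)[rule_format, of z] by simp
next
  case False
  show ?thesis
  proof (cases "y < 0")
    case True
    have "0 < -y" "-y < -x" "rat_size (-y) = rat_size (-x)" using True assms by (simp_all add: rat_size_uminus)
    then obtain z where "-y < z" "z \<le> -x" "rat_size z < rat_size (-y)" using pos_simpler by blast
    then show ?thesis using assms(2,3) rat_size_uminus[of z] rat_size_uminus[of y]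
      by (metis le_minus_iff minus_le_iff not_less order.strict_implies_order) 
  next
    case False
    then have "rat_size x \<le> 1" using \<open>\<not> 0 < x\<close> assms(3) rat_size_0 by (metis not_less)
    then have "x = 0" "y = 0" using rat_size_ge1[of x] assms(2) rat_size_1 by auto
    then show ?thesis using assms(1) by simp
  qed
qed

lemma simplest_in_mem:
  assumes "lo \<le> hi"
  shows "lo \<le> simplest_in lo hi \<and> simplest_in lo hi \<le> hi"
proof -
  define P where "P q = (lo \<le> q \<and> q \<le> hi \<and> (\<forall>r. lo \<le> r \<and> r \<le> hi \<and> r \<noteq> q \<longrightarrow> simpler q r))" for q
  obtain q0 where q0: "lo \<le> q0 \<and> q0 \<le> hi" "\<forall>r. lo \<le> r \<and> r \<le> hi \<longrightarrow> nat (rat_size q0) \<le> nat (rat_size r)"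
    using ex_has_least_nat[of "\<lambda>q. lo \<le> q \<and> q \<le> hi" lo "\<lambda>q. nat (rat_size q)"] assms by auto
  have min: "rat_size q0 \<le> rat_size r" if "lo \<le> r" "r \<le> hi" for r
    using q0(2) that rat_size_ge1[of r] rat_size_ge1[of q0] by fastforce
  have "P q0"
    unfolding P_def simpler_def
  proof (intro conjI allI impI)
    fix r assume r: "lo \<le> r \<and> r \<le> hi \<and> r \<noteq> q0"
    show "rat_size q0 < rat_size r"
    proof (rule ccontr)
      assume "\<not> rat_size q0 < rat_size r"
      then have eq: "rat_size q0 = rat_size r" using min r by force
      show False
      proof (cases "q0 < r")
        case True
        then show False using no_two_min[OF True eq] min q0(1) r by force
      next
        case False
        then have "r < q0" using r by auto
        then show False using no_two_min[OF _ eq[symmetric]] min q0(1) r eq by force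
      qed
    qed
  qed (use q0 in auto)
  moreover have "q = q0" if "P q" for q
  proof (rule ccontr)
    assume "q \<noteq> q0"
    then have "rat_size q < rat_size q0" "rat_size q0 < rat_size q"
      using that \<open>P q0\<close> unfolding P_def simpler_def by auto
    then show False by simp
  qed
  ultimately have "P (simplest_in lo hi)"
    unfolding simplest_in_def P_def[symmetric] by (metis theI)
  then show ?thesis unfolding P_def by simp
qed

lemma approx_bound: assumes "0 < e" shows "\<bar>approx c e - c\<bar> \<le> e"
  using simplest_in_mem[of "c - e" "c + e"] assms unfolding approx_def by (simp add: abs_le_iff)

lemma E_pos: "(0::real) < 1 / 2 ^ (2 ^ i)" by simp

lemma E_le_half: "(1::real) / 2 ^ (2 ^ i) \<le> 1/2"
proof -
  have "(2::real) ^ 1 \<le> 2 ^ (2 ^ i)" by (intro power_increasing) auto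
  then show ?thesis by (simp add: field_simps)
qed

lemma E_Suc: "(1::real) / 2 ^ (2 ^ Suc i) = (1 / 2 ^ (2 ^ i))^2"
  by (simp add: power_mult[symmetric] power_divide mult.commute)

lemma newton_err:
  fixes b s E :: real
  assumes s1: "1 \<le> s" and lo: "- E/2 \<le> b - s" and hi: "b - s \<le> E" and E: "0 < E" "E \<le> 1/2"
  shows "b > 0" "0 \<le> (s^2 + b^2)/(2*b) - s" "(s^2 + b^2)/(2*b) - s \<le> E^2/2"
proof -
  show bpos: "b > 0" using assms by linarith
  have eq: "(s^2 + b^2)/(2*b) - s = (b-s)^2/(2*b)" using bpos by (simp add: field_simps power2_eq_square)
  show "0 \<le> (s^2 + b^2)/(2*b) - s" unfolding eq using bpos by simp
  show "(s^2 + b^2)/(2*b) - s \<le> E^2/2"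
  proof (cases "s \<le> b")
    case True
    have "(b-s)^2 \<le> E^2" using True hi by (intro power_mono) auto
    moreover have "(b-s)^2/(2*b) \<le> (b-s)^2/2" using True s1 by (intro divide_left_mono) auto
    ultimately show ?thesis unfolding eq by linarith
  next
    case False
    have "(b-s)^2 = (s-b)^2" by (simp add: power2_commute)
    also have "\<dots> \<le> (E/2)^2" using False lo by (intro power_mono) auto
    finally have h1: "(b-s)^2 \<le> E^2/4" by (simp add: power_divide)
    have "2*b \<ge> 1" using lo s1 E by linarith
    then have "(b-s)^2/(2*b) \<le> (b-s)^2/1" by (intro divide_left_mono) auto
    moreover have "E^2 \<ge> 0" by simp
    ultimately show ?thesis unfolding eq using h1 by linarith
  qed
qed

lemma seq_inv:
  fixes a :: rat
  assumes "1 \<le> a" "a < 4"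
  shows "- (1 / 2 ^ (2 ^ i))/2 \<le> real_of_rat (sqrt_seq a i) - sqrt (real_of_rat a)
       \<and> real_of_rat (sqrt_seq a i) - sqrt (real_of_rat a) \<le> 1 / 2 ^ (2 ^ i)"
proof (induction i)
  case 0
  define s where "s = sqrt (real_of_rat a)"
  have "real_of_rat a < real_of_rat 4" using assms by (simp only: of_rat_less)
  then have a1: "1 \<le> real_of_rat a" "real_of_rat a < 4" using assms by (simp_all add: of_rat_less_eq)
  have s1: "1 \<le> s" using a1 by (simp add: s_def)
  have s2: "s < 2" using a1 real_sqrt_less_iff[of "real_of_rat a" 4] by (simp add: s_def)
  have ss: "s^2 = real_of_rat a" using a1 by (simp add: s_def)
  have "real_of_rat (sqrt_seq a 0) = (s^2 + 1)/2" using ss by (simp add: of_rat_add of_rat_divide)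
  moreover have "(s^2+1)/2 - s = (s-1)^2/2" by (simp add: power2_eq_square field_simps)
  ultimately have B0: "real_of_rat (sqrt_seq a 0) - s = (s-1)^2/2" by (simp only:)
  have "(s-1)^2 \<le> 1^2" using s1 s2 by (intro power_mono) auto
  moreover have "-(1/2) \<le> (s-1)^2" by (rule order_trans[of _ 0]) auto
  ultimately have "- (1 / 2 ^ (2 ^ 0))/2 \<le> real_of_rat (sqrt_seq a 0) - s
       \<and> real_of_rat (sqrt_seq a 0) - s \<le> 1 / 2 ^ (2 ^ 0)" unfolding B0 by simp
  then show ?case unfolding s_def by simp
next
  case (Suc i)
  define s where "s = sqrt (real_of_rat a)"
  define E where "E = (1::real) / 2 ^ (2 ^ i)"
  define b where "b = real_of_rat (sqrt_seq a i)"
  have a1: "1 \<le> real_of_rat a" using assms by (simp_all add: of_rat_less_eq)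
  have s1: "1 \<le> s" using a1 by (simp add: s_def)
  have ss: "s^2 = real_of_rat a" using a1 by (simp add: s_def)
  have IH: "- E/2 \<le> b - s" "b - s \<le> E" using Suc.IH unfolding s_def E_def b_def by auto
  have E: "0 < E" "E \<le> 1/2" unfolding E_def using E_le_half by auto
  note ne = newton_err[OF s1 IH E]
  define N where "N = (a + (sqrt_seq a i)\<^sup>2) / (2 * sqrt_seq a i)"
  define e where "e = (1::rat) / 2 ^ (2 ^ (i + 1) + 1)"
  have "e > 0" by (simp add: e_def)
  have RN: "real_of_rat N = (s^2 + b^2)/(2*b)" unfolding N_def b_def ss
    by (simp add: of_rat_add of_rat_divide of_rat_mult of_rat_power)
  have Re: "real_of_rat e = E^2/2" unfolding e_def E_def
    by (simp add: of_rat_divide of_rat_power of_rat_mult power_add power_mult[symmetric] power_divide mult.commute)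
  have "\<bar>sqrt_seq a (Suc i) - N\<bar> \<le> e" using approx_bound[OF \<open>e > 0\<close>] by (simp add: N_def e_def)
  then have "\<bar>real_of_rat (sqrt_seq a (Suc i)) - real_of_rat N\<bar> \<le> real_of_rat e"
    by (metis abs_of_rat of_rat_diff of_rat_less_eq)
  then have "\<bar>real_of_rat (sqrt_seq a (Suc i)) - (s^2 + b^2)/(2*b)\<bar> \<le> E^2/2" using RN Re by (simp only:)
  then have "- (E^2)/2 \<le> real_of_rat (sqrt_seq a (Suc i)) - s \<and> real_of_rat (sqrt_seq a (Suc i)) - s \<le> E^2"
    using ne(2,3) unfolding abs_le_iff by linarith
  moreover have "1 / 2 ^ (2 ^ Suc i) = E^2" unfolding E_def by (rule E_Suc)
  ultimately show ?case unfolding s_def[symmetric] by (simp only:)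
qed

lemma ex_n: assumes "(0::rat) < e" shows "\<exists>n. 1 / 2 ^ (2 ^ n) \<le> e"
proof -
  obtain n :: nat where n: "1/e < of_nat n" using reals_Archimedean2 by blast
  have "of_nat n < (2::rat) ^ n" by (metis of_nat_less_two_power)
  also have "(2::rat) ^ n \<le> 2 ^ (2 ^ n)" by (intro power_increasing) (auto intro: less_imp_le less_exp)
  finally have "of_nat n < (2::rat) ^ (2 ^ n)" .
  with n have "1/e < 2 ^ (2 ^ n)" by (rule less_trans)
  then have "1 / 2 ^ (2 ^ n) < e" using assms by (simp add: field_simps)
  then show ?thesis by (intro exI[of _ n]) simp
qed

lemma abs_help: fixes x E :: real shows "-E/2 \<le> x \<and> x \<le> E \<Longrightarrow> 0 < E \<Longrightarrow> \<bar>x\<bar> \<le> E"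
  by (auto simp: abs_le_iff)

lemma sa_bound:
  fixes a e :: rat
  assumes "1 \<le> a" "a < 4" "0 < e"
  shows "\<bar>real_of_rat (sqrt_approx a e) - sqrt (real_of_rat a)\<bar> \<le> real_of_rat e"
proof -
  define n where "n = (LEAST n. 1 / 2 ^ (2 ^ n) \<le> e)"
  have "1 / 2 ^ (2 ^ n) \<le> e" unfolding n_def by (rule LeastI_ex[OF ex_n[OF assms(3)]])
  then have "real_of_rat (1 / 2 ^ (2 ^ n)) \<le> real_of_rat e" by (simp only: of_rat_less_eq)
  then have le: "(1::real) / 2 ^ (2 ^ n) \<le> real_of_rat e" by (simp add: of_rat_divide of_rat_power)
  have "\<bar>real_of_rat (sqrt_seq a n) - sqrt (real_of_rat a)\<bar> \<le> 1 / 2 ^ (2 ^ n)"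
    using seq_inv[OF assms(1,2), of n] E_pos[of n] by (rule abs_help)
  then show ?thesis using le unfolding sqrt_approx_def n_def by linarith
qed

theorem theorem38:
  fixes a :: rat
  assumes "1 \<le> a" and "a < 4"
  shows "\<forall>\<epsilon>1 \<epsilon>2. 0 < \<epsilon>1 \<longrightarrow> 0 < \<epsilon>2 \<longrightarrow>
           \<bar>sqrt_approx a \<epsilon>1 - sqrt_approx a \<epsilon>2\<bar> \<le> \<epsilon>1 + \<epsilon>2"
proof (intro allI impI)
  fix e1 e2 :: rat assume "0 < e1" "0 < e2"
  have "\<bar>real_of_rat (sqrt_approx a e1) - real_of_rat (sqrt_approx a e2)\<bar> \<le> real_of_rat e1 + real_of_rat e2"
    using sa_bound[OF assms \<open>0 < e1\<close>] sa_bound[OF assms \<open>0 < e2\<close>] by linarith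
  then have "real_of_rat \<bar>sqrt_approx a e1 - sqrt_approx a e2\<bar> \<le> real_of_rat (e1 + e2)"
    by (metis abs_of_rat of_rat_diff of_rat_add)
  then show "\<bar>sqrt_approx a e1 - sqrt_approx a e2\<bar> \<le> e1 + e2" by (simp only: of_rat_less_eq)
qed

end
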